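(* Let $\pi:P\to M$ be a principal fibre bundle with group $G=P^{-1}P$, in the setting described in the context. For a connection $\nabla$ in the groupoid $PP^{-1}$, define its connection form $\omega$ by $\omega(u,v):=u^{-1}\big(\nabla(\pi(u),\pi(v))\cdot v\big)\in G$ for neighbours $u\sim v$ in $P$; equivalently $u\cdot\omega(u,v)=\nabla(\pi(u),\pi(v))\cdot v$. Then the assignment $\nabla\mapsto\omega$ is a bijection between the set of connections $\nabla$ in $PP^{-1}$ and the set of $G$-valued 1-forms $\omega$ on $P$ satisfying the two conditions (i) $\omega(xg,y)=g^{-1}\omega(x,y)$ whenever $x\sim y$ in $P$ and $g\in G$ is such that also $xg\sim y$; (ii) $\omega(xg,yg)=g^{-1}\omega(x,y)g$ for all $x\sim y$ in $P$ and all $g\in G$.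
   Context: Setting (all calculations may be done as in sets, the paper works internally in a left exact category). Let $\Phi$ be a groupoid whose object set contains a set $M$ and an object $*\notin M$. Let $P$ be the set of arrows of $\Phi$ with domain $*$ and codomain in $M$, and $\pi:P\to M$ the codomain map. The group $G=P^{-1}P:=\Phi( *,* )$ acts on $P$ from the right by precomposition ($x\cdot g=xg$); this action is free and transitive on each fibre $\pi^{-1}(a)$. For $x,z$ in the same fibre, $x^{-1}z\in G$ is the composite in $\Phi$. $PP^{-1}$ denotes the full subgroupoid of $\Phi$ on the objects $M$; its arrows $a\to b$ are the composites $yx^{-1}$ with $\pi(x)=a,\pi(y)=b$, and it acts on $P$ from the left by postcomposition. Composition is written right to left. Both $M$ and $P$ carry a reflexive symmetric "neighbour" relation $\sim$; $\pi$ preserves $\sim$; an infinitesimal $k$-simplex is a $(k+1)$-tuple of mutual neighbours; for every infinitesimal $k$-simplex $(a_0,\dots,a_k)$ in $M$ and every $x_0\in\pi^{-1}(a_0)$ there is an infinitesimal $k$-simplex $(x_0,\dots,x_k)$ in $P$ with $\pi(x_i)=a_i$; and the right action of each $g\in G$ preserves $\sim$ on $P$. A connection in $PP^{-1}$ is a map assigning to each pair $a\sim b$ in $M$ an arrow $\nabla(a,b)$ of $PP^{-1}$ from $b$ to $a$, with $\nabla(a,a)=\mathrm{id}_a$ and $\nabla(b,a)=\nabla(a,b)^{-1}$ (a morphism of reflexive symmetric graphs from the neighbour relation on $M$ to $PP^{-1}$). A $G$-valued 1-form on $P$ is a map $\omega$ assigning to each pair $x\sim y$ in $P$ an element $\omega(x,y)\in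 G$, with $\omega(x,x)=e$ and $\omega(y,x)=\omega(x,y)^{-1}$. *)

theory Defs
  imports Main
begin

text \<open>A groupoid given by a set of objects Obj, a set of arrows Arr, domain and
codomain maps, composition (written right to left: cmp g f means g after f,
defined when dm g = cd f), identities and inverses.\<close>

definition groupoid ::
  "'o set \<Rightarrow> 'a set \<Rightarrow> ('a \<Rightarrow> 'o) \<Rightarrow> ('a \<Rightarrow> 'o) \<Rightarrow> ('a \<Rightarrow> 'a \<Rightarrow> 'a)
   \<Rightarrow> ('o \<Rightarrow> 'a) \<Rightarrow> ('a \<Rightarrow> 'a) \<Rightarrow> bool" where
  "groupoid Obj Arr dm cd cmp ide iv \<longleftrightarrow>
     (\<forall>f\<in>Arr. dm f \<in> Obj \<and> cd f \<in> Obj) \<and>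
     (\<forall>f\<in>Arr. \<forall>g\<in>Arr. dm g = cd f \<longrightarrow>
        cmp g f \<in> Arr \<and> dm (cmp g f) = dm f \<and> cd (cmp g f) = cd g) \<and>
     (\<forall>f\<in>Arr. \<forall>g\<in>Arr. \<forall>h\<in>Arr. dm g = cd f \<longrightarrow> dm h = cd g \<longrightarrow>
        cmp h (cmp g f) = cmp (cmp h g) f) \<and>
     (\<forall>a\<in>Obj. ide a \<in> Arr \<and> dm (ide a) = a \<and> cd (ide a) = a) \<and>
     (\<forall>f\<in>Arr. cmp (ide (cd f)) f = f \<and> cmp f (ide (dm f)) = f) \<and>
     (\<forall>f\<in>Arr. iv f \<in> Arr \<and> dm (iv f) = cd f \<and> cd (iv f) = dm f \<and>
        cmp (iv f) f = ide (dm f) \<and> cmp f (iv f) = ide (cd f))"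

text \<open>P: arrows from the base object s (the object *) to objects of M;
G = Phi(s,s).\<close>

definition bundleP :: "'a set \<Rightarrow> ('a \<Rightarrow> 'o) \<Rightarrow> ('a \<Rightarrow> 'o) \<Rightarrow> 'o set \<Rightarrow> 'o \<Rightarrow> 'a set" where
  "bundleP Arr dm cd M s = {x \<in> Arr. dm x = s \<and> cd x \<in> M}"

definition bundleG :: "'a set \<Rightarrow> ('a \<Rightarrow> 'o) \<Rightarrow> ('a \<Rightarrow> 'o) \<Rightarrow> 'o \<Rightarrow> 'a set" where
  "bundleG Arr dm cd s = {g \<in> Arr. dm g = s \<and> cd g = s}"

definition inf_simplex :: "'b set \<Rightarrow> ('b \<Rightarrow> 'b \<Rightarrow> bool) \<Rightarrow> 'b list \<Rightarrow> bool" where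
  "inf_simplex S nb xs \<longleftrightarrow> set xs \<subseteq> S \<and>
     (\<forall>i<length xs. \<forall>j<length xs. nb (xs ! i) (xs ! j))"

text \<open>Standing assumptions of the setting (principal fibre bundle
pi = cd : P \<rightarrow> M with neighbour relations).\<close>

definition bundle_setting ::
  "'o set \<Rightarrow> 'a set \<Rightarrow> ('a \<Rightarrow> 'o) \<Rightarrow> ('a \<Rightarrow> 'o) \<Rightarrow> ('a \<Rightarrow> 'a \<Rightarrow> 'a)
   \<Rightarrow> ('o \<Rightarrow> 'a) \<Rightarrow> ('a \<Rightarrow> 'a) \<Rightarrow> 'o set \<Rightarrow> 'o
   \<Rightarrow> ('o \<Rightarrow> 'o \<Rightarrow> bool) \<Rightarrow> ('a \<Rightarrow> 'a \<Rightarrow> bool) \<Rightarrow> bool" where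
  "bundle_setting Obj Arr dm cd cmp ide iv M s nbM nbP \<longleftrightarrow>
     groupoid Obj Arr dm cd cmp ide iv \<and>
     M \<subseteq> Obj \<and> s \<in> Obj \<and> s \<notin> M \<and>
     \<comment> \<open>pi is surjective (principal fibre bundle)\<close>
     (\<forall>a\<in>M. \<exists>x\<in>bundleP Arr dm cd M s. cd x = a) \<and>
     \<comment> \<open>neighbour relations reflexive and symmetric\<close>
     (\<forall>a\<in>M. nbM a a) \<and> (\<forall>a\<in>M. \<forall>b\<in>M. nbM a b \<longrightarrow> nbM b a) \<and>
     (\<forall>x\<in>bundleP Arr dm cd M s. nbP x x) \<and>
     (\<forall>x\<in>bundleP Arr dm cd M s. \<forall>y\<in>bundleP Arr dm cd M s. nbP x y \<longrightarrow> nbP y x) \<and>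
     \<comment> \<open>pi preserves neighbours\<close>
     (\<forall>x\<in>bundleP Arr dm cd M s. \<forall>y\<in>bundleP Arr dm cd M s.
        nbP x y \<longrightarrow> nbM (cd x) (cd y)) \<and>
     \<comment> \<open>lifting of infinitesimal k-simplices with prescribed first vertex\<close>
     (\<forall>as x0. inf_simplex M nbM as \<longrightarrow> as \<noteq> [] \<longrightarrow>
        x0 \<in> bundleP Arr dm cd M s \<longrightarrow> cd x0 = as ! 0 \<longrightarrow>
        (\<exists>xs. length xs = length as \<and> inf_simplex (bundleP Arr dm cd M s) nbP xs \<and>
              xs ! 0 = x0 \<and> (\<forall>i<length as. cd (xs ! i) = as ! i))) \<and>
     \<comment> \<open>the right action of G preserves neighbours\<close>
     (\<forall>x\<in>bundleP Arr dm cd M s. \<forall>y\<in>bundleP Arr dm cd M s. \<forall>g\<in>bundleG Arr dm cd s.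
        nbP x y \<longrightarrow> nbP (cmp x g) (cmp y g))"

text \<open>Connections in PP^{-1}: nabla a b is an arrow b \<rightarrow> a for a ~ b in M;
values outside this domain are fixed to undefined (so that maps are
determined by their values on neighbour pairs).\<close>

definition connections ::
  "'a set \<Rightarrow> ('a \<Rightarrow> 'o) \<Rightarrow> ('a \<Rightarrow> 'o) \<Rightarrow> ('o \<Rightarrow> 'a) \<Rightarrow> ('a \<Rightarrow> 'a)
   \<Rightarrow> 'o set \<Rightarrow> ('o \<Rightarrow> 'o \<Rightarrow> bool) \<Rightarrow> ('o \<Rightarrow> 'o \<Rightarrow> 'a) set" where
  "connections Arr dm cd ide iv M nbM =
     {nab. (\<forall>a\<in>M. \<forall>b\<in>M. nbM a b \<longrightarrow>
              nab a b \<in> Arr \<and> dm (nab a b) = b \<and> cd (nab a b) = a) \<and>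
           (\<forall>a\<in>M. nab a a = ide a) \<and>
           (\<forall>a\<in>M. \<forall>b\<in>M. nbM a b \<longrightarrow> nab b a = iv (nab a b)) \<and>
           (\<forall>a b. \<not> (a \<in> M \<and> b \<in> M \<and> nbM a b) \<longrightarrow> nab a b = undefined)}"

definition equivariant_forms ::
  "'a set \<Rightarrow> ('a \<Rightarrow> 'o) \<Rightarrow> ('a \<Rightarrow> 'o) \<Rightarrow> ('a \<Rightarrow> 'a \<Rightarrow> 'a)
   \<Rightarrow> ('o \<Rightarrow> 'a) \<Rightarrow> ('a \<Rightarrow> 'a) \<Rightarrow> 'o set \<Rightarrow> 'o \<Rightarrow> ('a \<Rightarrow> 'a \<Rightarrow> bool)
   \<Rightarrow> ('a \<Rightarrow> 'a \<Rightarrow> 'a) set" where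
  "equivariant_forms Arr dm cd cmp ide iv M s nbP =
     (let P = bundleP Arr dm cd M s; G = bundleG Arr dm cd s in
     {om. (\<forall>x\<in>P. \<forall>y\<in>P. nbP x y \<longrightarrow> om x y \<in> G) \<and>
          (\<forall>x\<in>P. om x x = ide s) \<and>
          (\<forall>x\<in>P. \<forall>y\<in>P. nbP x y \<longrightarrow> om y x = iv (om x y)) \<and>
          (\<forall>x y. \<not> (x \<in> P \<and> y \<in> P \<and> nbP x y) \<longrightarrow> om x y = undefined) \<and>
          \<comment> \<open>(i)\<close>
          (\<forall>x\<in>P. \<forall>y\<in>P. \<forall>g\<in>G. nbP x y \<longrightarrow> nbP (cmp x g) y \<longrightarrow>
              om (cmp x g) y = cmp (iv g) (om x y)) \<and>
          \<comment> \<open>(ii)\<close>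
          (\<forall>x\<in>P. \<forall>y\<in>P. \<forall>g\<in>G. nbP x y \<longrightarrow>
              om (cmp x g) (cmp y g) = cmp (iv g) (cmp (om x y) g))})"

definition connection_form ::
  "'a set \<Rightarrow> ('a \<Rightarrow> 'o) \<Rightarrow> ('a \<Rightarrow> 'o) \<Rightarrow> ('a \<Rightarrow> 'a \<Rightarrow> 'a) \<Rightarrow> ('a \<Rightarrow> 'a)
   \<Rightarrow> 'o set \<Rightarrow> 'o \<Rightarrow> ('a \<Rightarrow> 'a \<Rightarrow> bool) \<Rightarrow> ('o \<Rightarrow> 'o \<Rightarrow> 'a) \<Rightarrow> ('a \<Rightarrow> 'a \<Rightarrow> 'a)" where
  "connection_form Arr dm cd cmp iv M s nbP nab =
     (\<lambda>u v. if u \<in> bundleP Arr dm cd M s \<and> v \<in> bundleP Arr dm cd M s \<and> nbP u v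
            then cmp (iv u) (cmp (nab (cd u) (cd v)) v) else undefined)"

end

theory Submission
  imports Defs
begin

locale bset =
  fixes Obj Arr dm cd cmp ide iv M s nbM nbP
  assumes bs: "bundle_setting Obj Arr dm cd cmp ide iv M s nbM nbP"
begin

lemma grp: "groupoid Obj Arr dm cd cmp ide iv" using bs unfolding bundle_setting_def by (elim conjE)

lemma dm_Obj: "f \<in> Arr \<Longrightarrow> dm f \<in> Obj" using grp unfolding groupoid_def by blast
lemma cd_Obj: "f \<in> Arr \<Longrightarrow> cd f \<in> Obj" using grp unfolding groupoid_def by blast
lemma cmp_Arr [simp]: "f \<in> Arr \<Longrightarrow> g \<in> Arr \<Longrightarrow> dm g = cd f \<Longrightarrow> cmp g f \<in> Arr"
  using grp unfolding groupoid_def by blast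
lemma dm_cmp [simp]: "f \<in> Arr \<Longrightarrow> g \<in> Arr \<Longrightarrow> dm g = cd f \<Longrightarrow> dm (cmp g f) = dm f"
  using grp unfolding groupoid_def by blast
lemma cd_cmp [simp]: "f \<in> Arr \<Longrightarrow> g \<in> Arr \<Longrightarrow> dm g = cd f \<Longrightarrow> cd (cmp g f) = cd g"
  using grp unfolding groupoid_def by blast
lemma assoc [simp]: "f \<in> Arr \<Longrightarrow> g \<in> Arr \<Longrightarrow> h \<in> Arr \<Longrightarrow> dm g = cd f \<Longrightarrow> dm h = cd g \<Longrightarrow>
   cmp (cmp h g) f = cmp h (cmp g f)"
  using grp unfolding groupoid_def by metis
lemma ide_Arr [simp]: "a \<in> Obj \<Longrightarrow> ide a \<in> Arr" using grp unfolding groupoid_def by blast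
lemma dm_ide [simp]: "a \<in> Obj \<Longrightarrow> dm (ide a) = a" using grp unfolding groupoid_def by blast
lemma cd_ide [simp]: "a \<in> Obj \<Longrightarrow> cd (ide a) = a" using grp unfolding groupoid_def by blast
lemma ide_l [simp]: "f \<in> Arr \<Longrightarrow> cd f = a \<Longrightarrow> cmp (ide a) f = f" using grp unfolding groupoid_def by blast
lemma ide_r [simp]: "f \<in> Arr \<Longrightarrow> dm f = a \<Longrightarrow> cmp f (ide a) = f" using grp unfolding groupoid_def by blast
lemma iv_Arr [simp]: "f \<in> Arr \<Longrightarrow> iv f \<in> Arr" using grp unfolding groupoid_def by blast
lemma dm_iv [simp]: "f \<in> Arr \<Longrightarrow> dm (iv f) = cd f" using grp unfolding groupoid_def by blast
lemma cd_iv [simp]: "f \<in> Arr \<Longrightarrow> cd (iv f) = dm f" using grp unfolding groupoid_def by blast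
lemma iv_l [simp]: "f \<in> Arr \<Longrightarrow> cmp (iv f) f = ide (dm f)" using grp unfolding groupoid_def by blast
lemma iv_r [simp]: "f \<in> Arr \<Longrightarrow> cmp f (iv f) = ide (cd f)" using grp unfolding groupoid_def by blast

lemma iv_l2 [simp]: "f \<in> Arr \<Longrightarrow> g \<in> Arr \<Longrightarrow> dm f = cd g \<Longrightarrow> cmp (iv f) (cmp f g) = g"
proof -
  assume a: "f \<in> Arr" "g \<in> Arr" "dm f = cd g"
  have "cmp (iv f) (cmp f g) = cmp (cmp (iv f) f) g" using a by (intro assoc[symmetric]) simp_all
  also have "\<dots> = g" using a by (simp add: dm_Obj)
  finally show ?thesis .
qed

lemma iv_r2 [simp]: "f \<in> Arr \<Longrightarrow> g \<in> Arr \<Longrightarrow> cd f = cd g \<Longrightarrow> cmp f (cmp (iv f) g) = g"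
proof -
  assume a: "f \<in> Arr" "g \<in> Arr" "cd f = cd g"
  have "cmp f (cmp (iv f) g) = cmp (cmp f (iv f)) g" using a by (intro assoc[symmetric]) simp_all
  also have "\<dots> = g" using a by (simp add: cd_Obj)
  finally show ?thesis .
qed

lemma iv_unique: "f \<in> Arr \<Longrightarrow> h \<in> Arr \<Longrightarrow> dm h = cd f \<Longrightarrow> cd h = dm f \<Longrightarrow> cmp h f = ide (dm f) \<Longrightarrow> h = iv f"
proof -
  assume a: "f \<in> Arr" "h \<in> Arr" "dm h = cd f" "cd h = dm f" "cmp h f = ide (dm f)"
  have "h = cmp h (cmp f (iv f))" using a by (simp add: cd_Obj)
  also have "\<dots> = cmp (cmp h f) (iv f)" using a by (intro assoc[symmetric]) simp_all
  also have "\<dots> = iv f" using a by (simp add: dm_Obj)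
  finally show ?thesis .
qed

lemma iv_cmp [simp]: "f \<in> Arr \<Longrightarrow> g \<in> Arr \<Longrightarrow> dm g = cd f \<Longrightarrow> iv (cmp g f) = cmp (iv f) (iv g)"
  by (rule iv_unique[symmetric]) (simp_all add: dm_Obj)

lemma iv_iv [simp]: "f \<in> Arr \<Longrightarrow> iv (iv f) = f"
  by (rule iv_unique[symmetric]) (simp_all add: dm_Obj)

abbreviation "PP \<equiv> bundleP Arr dm cd M s"
abbreviation "GG \<equiv> bundleG Arr dm cd s"

lemma inP: "x \<in> PP \<longleftrightarrow> x \<in> Arr \<and> dm x = s \<and> cd x \<in> M"
  unfolding bundleP_def by blast
lemma inG: "g \<in> GG \<longleftrightarrow> g \<in> Arr \<and> dm g = s \<and> cd g = s"
  unfolding bundleG_def by blast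

lemma BS: "groupoid Obj Arr dm cd cmp ide iv \<and>
     M \<subseteq> Obj \<and> s \<in> Obj \<and> s \<notin> M \<and>
     (\<forall>a\<in>M. \<exists>x\<in>PP. cd x = a) \<and>
     (\<forall>a\<in>M. nbM a a) \<and> (\<forall>a\<in>M. \<forall>b\<in>M. nbM a b \<longrightarrow> nbM b a) \<and>
     (\<forall>x\<in>PP. nbP x x) \<and>
     (\<forall>x\<in>PP. \<forall>y\<in>PP. nbP x y \<longrightarrow> nbP y x) \<and>
     (\<forall>x\<in>PP. \<forall>y\<in>PP. nbP x y \<longrightarrow> nbM (cd x) (cd y)) \<and>
     (\<forall>as x0. inf_simplex M nbM as \<longrightarrow> as \<noteq> [] \<longrightarrow>
        x0 \<in> PP \<longrightarrow> cd x0 = as ! 0 \<longrightarrow>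
        (\<exists>xs. length xs = length as \<and> inf_simplex PP nbP xs \<and>
              xs ! 0 = x0 \<and> (\<forall>i<length as. cd (xs ! i) = as ! i))) \<and>
     (\<forall>x\<in>PP. \<forall>y\<in>PP. \<forall>g\<in>GG. nbP x y \<longrightarrow> nbP (cmp x g) (cmp y g))"
  using bs unfolding bundle_setting_def .

lemmas grpx = BS[THEN conjunct1]
lemmas MObj = BS[THEN conjunct2, THEN conjunct1]
lemmas sObj = BS[THEN conjunct2, THEN conjunct2, THEN conjunct1]
lemmas snM = BS[THEN conjunct2, THEN conjunct2, THEN conjunct2, THEN conjunct1]
lemmas B5 = BS[THEN conjunct2, THEN conjunct2, THEN conjunct2, THEN conjunct2, THEN conjunct1]
lemmas B6 = BS[THEN conjunct2, THEN conjunct2, THEN conjunct2, THEN conjunct2, THEN conjunct2, THEN conjunct1]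
lemmas B7 = BS[THEN conjunct2, THEN conjunct2, THEN conjunct2, THEN conjunct2, THEN conjunct2, THEN conjunct2, THEN conjunct1]
lemmas B8 = BS[THEN conjunct2, THEN conjunct2, THEN conjunct2, THEN conjunct2, THEN conjunct2, THEN conjunct2, THEN conjunct2, THEN conjunct1]
lemmas B9 = BS[THEN conjunct2, THEN conjunct2, THEN conjunct2, THEN conjunct2, THEN conjunct2, THEN conjunct2, THEN conjunct2, THEN conjunct2, THEN conjunct1]
lemmas B10 = BS[THEN conjunct2, THEN conjunct2, THEN conjunct2, THEN conjunct2, THEN conjunct2, THEN conjunct2, THEN conjunct2, THEN conjunct2, THEN conjunct2, THEN conjunct1]
lemmas B11 = BS[THEN conjunct2, THEN conjunct2, THEN conjunct2, THEN conjunct2, THEN conjunct2, THEN conjunct2, THEN conjunct2, THEN conjunct2, THEN conjunct2, THEN conjunct2, THEN conjunct1]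
lemmas B12 = BS[THEN conjunct2, THEN conjunct2, THEN conjunct2, THEN conjunct2, THEN conjunct2, THEN conjunct2, THEN conjunct2, THEN conjunct2, THEN conjunct2, THEN conjunct2, THEN conjunct2]

lemma s_Obj [simp]: "s \<in> Obj" by (rule sObj)
lemma M_Obj: "a \<in> M \<Longrightarrow> a \<in> Obj" using MObj by blast
lemma surjP: "a \<in> M \<Longrightarrow> \<exists>x\<in>PP. cd x = a" using B5 by blast
lemma nbM_refl: "a \<in> M \<Longrightarrow> nbM a a" using B6 by blast
lemma nbM_sym: "a \<in> M \<Longrightarrow> b \<in> M \<Longrightarrow> nbM a b \<Longrightarrow> nbM b a" using B7 by blast
lemma nbP_refl: "x \<in> PP \<Longrightarrow> nbP x x" using B8 by blast
lemma nbP_sym: "x \<in> PP \<Longrightarrow> y \<in> PP \<Longrightarrow> nbP x y \<Longrightarrow> nbP y x" using B9 by blast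
lemma pres: "x \<in> PP \<Longrightarrow> y \<in> PP \<Longrightarrow> nbP x y \<Longrightarrow> nbM (cd x) (cd y)" using B10 by blast
lemma act: "x \<in> PP \<Longrightarrow> y \<in> PP \<Longrightarrow> g \<in> GG \<Longrightarrow> nbP x y \<Longrightarrow> nbP (cmp x g) (cmp y g)"
  using B12 by blast
lemma lift: "inf_simplex M nbM as \<Longrightarrow> as \<noteq> [] \<Longrightarrow> x0 \<in> PP \<Longrightarrow> cd x0 = as ! 0 \<Longrightarrow>
        (\<exists>xs. length xs = length as \<and> inf_simplex PP nbP xs \<and>
              xs ! 0 = x0 \<and> (\<forall>i<length as. cd (xs ! i) = as ! i))"
  using B11 by blast

lemma lift2:
  assumes "a \<in> M" "b \<in> M" "nbM a b" "x \<in> PP" "cd x = a"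
  shows "\<exists>y\<in>PP. cd y = b \<and> nbP x y"
proof -
  have ab: "nbM a a" "nbM b b" "nbM a b" "nbM b a"
    using nbM_refl[OF assms(1)] nbM_refl[OF assms(2)] assms(3) nbM_sym[OF assms(1-3)] by -
  have "inf_simplex M nbM [a, b]"
    unfolding inf_simplex_def
  proof (intro conjI allI impI)
    fix i j assume "i < length [a, b]" "j < length [a, b]"
    then have "i = 0 \<or> i = 1" "j = 0 \<or> j = 1" by auto
    then show "nbM ([a, b] ! i) ([a, b] ! j)" using ab by (elim disjE) simp_all
  next
    show "set [a, b] \<subseteq> M" using assms(1,2) by simp
  qed
  then obtain xs where xs: "length xs = length [a,b]" "inf_simplex PP nbP xs" "xs ! 0 = x"
      "\<forall>i<length [a,b]. cd (xs ! i) = [a, b] ! i"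
    using lift[of "[a,b]" x] assms(4,5) by auto
  have l: "1 < length xs" using xs(1) by simp
  have "xs ! 1 \<in> PP" using xs(2) nth_mem[OF l] unfolding inf_simplex_def by blast
  moreover have "cd (xs ! 1) = b" using xs(1,4) by simp
  moreover have "nbP x (xs ! 1)" using xs(2,3) l unfolding inf_simplex_def by force
  ultimately show ?thesis by blast
qed

abbreviation "CC \<equiv> connections Arr dm cd ide iv M nbM"
abbreviation "EE \<equiv> equivariant_forms Arr dm cd cmp ide iv M s nbP"
abbreviation "CF \<equiv> connection_form Arr dm cd cmp iv M s nbP"

lemma CC_iff: "nab \<in> CC \<longleftrightarrow> (\<forall>a\<in>M. \<forall>b\<in>M. nbM a b \<longrightarrow>
              nab a b \<in> Arr \<and> dm (nab a b) = b \<and> cd (nab a b) = a) \<and>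
           (\<forall>a\<in>M. nab a a = ide a) \<and>
           (\<forall>a\<in>M. \<forall>b\<in>M. nbM a b \<longrightarrow> nab b a = iv (nab a b)) \<and>
           (\<forall>a b. \<not> (a \<in> M \<and> b \<in> M \<and> nbM a b) \<longrightarrow> nab a b = undefined)"
  unfolding connections_def by (simp only: mem_Collect_eq)

lemma EE_iff: "om \<in> EE \<longleftrightarrow> (\<forall>x\<in>PP. \<forall>y\<in>PP. nbP x y \<longrightarrow> om x y \<in> GG) \<and>
          (\<forall>x\<in>PP. om x x = ide s) \<and>
          (\<forall>x\<in>PP. \<forall>y\<in>PP. nbP x y \<longrightarrow> om y x = iv (om x y)) \<and>
          (\<forall>x y. \<not> (x \<in> PP \<and> y \<in> PP \<and> nbP x y) \<longrightarrow> om x y = undefined) \<and>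
          (\<forall>x\<in>PP. \<forall>y\<in>PP. \<forall>g\<in>GG. nbP x y \<longrightarrow> nbP (cmp x g) y \<longrightarrow>
              om (cmp x g) y = cmp (iv g) (om x y)) \<and>
          (\<forall>x\<in>PP. \<forall>y\<in>PP. \<forall>g\<in>GG. nbP x y \<longrightarrow>
              om (cmp x g) (cmp y g) = cmp (iv g) (cmp (om x y) g))"
  unfolding equivariant_forms_def Let_def by (simp only: mem_Collect_eq)

lemma CF_app: "x \<in> PP \<Longrightarrow> y \<in> PP \<Longrightarrow> nbP x y \<Longrightarrow> CF nab x y = cmp (iv x) (cmp (nab (cd x) (cd y)) y)"
  unfolding connection_form_def by simp

lemma CC1: "nab \<in> CC \<Longrightarrow> a \<in> M \<Longrightarrow> b \<in> M \<Longrightarrow> nbM a b \<Longrightarrow>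
   nab a b \<in> Arr \<and> dm (nab a b) = b \<and> cd (nab a b) = a"
  unfolding CC_iff by (elim conjE) blast
lemma CC2: "nab \<in> CC \<Longrightarrow> a \<in> M \<Longrightarrow> nab a a = ide a"
  unfolding CC_iff by (elim conjE) blast
lemma CC3: "nab \<in> CC \<Longrightarrow> a \<in> M \<Longrightarrow> b \<in> M \<Longrightarrow> nbM a b \<Longrightarrow> nab b a = iv (nab a b)"
  unfolding CC_iff by (elim conjE) blast
lemma CC4: "nab \<in> CC \<Longrightarrow> \<not> (a \<in> M \<and> b \<in> M \<and> nbM a b) \<Longrightarrow> nab a b = undefined"
  unfolding CC_iff by (elim conjE) blast

lemma nabA:
  assumes "nab \<in> CC" "x \<in> PP" "y \<in> PP" "nbP x y"
  shows "nab (cd x) (cd y) \<in> Arr" "dm (nab (cd x) (cd y)) = cd y" "cd (nab (cd x) (cd y)) = cd x"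
proof -
  have "cd x \<in> M" "cd y \<in> M" using assms unfolding inP by auto
  then show "nab (cd x) (cd y) \<in> Arr" "dm (nab (cd x) (cd y)) = cd y" "cd (nab (cd x) (cd y)) = cd x"
    using CC1[OF assms(1) _ _ pres[OF assms(2-4)]] by auto
qed

lemma partA:
  assumes nab: "nab \<in> CC"
  shows "CF nab \<in> EE"
  unfolding EE_iff
proof (intro conjI ballI allI impI)
  fix x y assume xy: "x \<in> PP" "y \<in> PP" "nbP x y"
  note N = nabA[OF nab xy]
  show "CF nab x y \<in> GG" using xy N by (simp add: CF_app inG inP)
  show "CF nab y x = iv (CF nab x y)"
  proof -
    have "nab (cd y) (cd x) = iv (nab (cd x) (cd y))"
      using nab pres[OF xy] xy unfolding CC_iff inP by auto
    then show ?thesis using xy N nbP_sym[OF xy] by (simp add: CF_app inP)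
  qed
next
  fix x assume x: "x \<in> PP"
  have "nab (cd x) (cd x) = ide (cd x)" using nab x unfolding CC_iff inP by auto
  then show "CF nab x x = ide s" using x nbP_refl[OF x] by (simp add: CF_app inP M_Obj)
next
  fix x y assume "\<not> (x \<in> PP \<and> y \<in> PP \<and> nbP x y)"
  then show "CF nab x y = undefined" unfolding connection_form_def by auto
next
  fix x y g assume xy: "x \<in> PP" "y \<in> PP" "g \<in> GG" "nbP x y" "nbP (cmp x g) y"
  note N = nabA[OF nab xy(1,2,4)]
  have xg: "cmp x g \<in> PP" using xy by (simp add: inP inG)
  have "cd (cmp x g) = cd x" using xy by (simp add: inP inG)
  then show "CF nab (cmp x g) y = cmp (iv g) (CF nab x y)"
    using xy xg N by (simp add: CF_app inP inG)
next
  fix x y g assume xy: "x \<in> PP" "y \<in> PP" "g \<in> GG" "nbP x y"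
  note N = nabA[OF nab xy(1,2,4)]
  have xg: "cmp x g \<in> PP" "cmp y g \<in> PP" using xy by (simp_all add: inP inG)
  have "cd (cmp x g) = cd x" "cd (cmp y g) = cd y" using xy by (simp_all add: inP inG)
  then show "CF nab (cmp x g) (cmp y g) = cmp (iv g) (cmp (CF nab x y) g)"
    using xy xg N act[OF xy] by (simp add: CF_app inP inG)
qed

lemma partB: "inj_on CF CC"
proof (rule inj_onI)
  fix n1 n2 assume n: "n1 \<in> CC" "n2 \<in> CC" "CF n1 = CF n2"
  show "n1 = n2"
  proof (intro ext)
    fix a b
    show "n1 a b = n2 a b"
    proof (cases "a \<in> M \<and> b \<in> M \<and> nbM a b")
      case True
      then obtain x where x: "x \<in> PP" "cd x = a" using surjP by blast
      then obtain y where y: "y \<in> PP" "cd y = b" "nbP x y" using lift2 True by blast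
      note N1 = nabA[OF n(1) x(1) y(1) y(3)] and N2 = nabA[OF n(2) x(1) y(1) y(3)]
      have "CF n1 x y = CF n2 x y" using n by simp
      then have e: "cmp (iv x) (cmp (n1 a b) y) = cmp (iv x) (cmp (n2 a b) y)"
        using x y by (simp add: CF_app)
      have "cmp (n1 a b) y = cmp x (cmp (iv x) (cmp (n1 a b) y))"
        using x y N1 by (simp add: inP)
      also have "\<dots> = cmp x (cmp (iv x) (cmp (n2 a b) y))" using e by simp
      also have "\<dots> = cmp (n2 a b) y" using x y N2 by (simp add: inP)
      finally have e2: "cmp (n1 a b) y = cmp (n2 a b) y" .
      have "n1 a b = cmp (cmp (n1 a b) y) (iv y)" using x y N1 by (simp add: inP)
      also have "\<dots> = cmp (cmp (n2 a b) y) (iv y)" using e2 by simp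
      also have "\<dots> = n2 a b" using x y N2 by (simp add: inP)
      finally show ?thesis .
    next
      case False
      then show ?thesis using n unfolding CC_iff by auto
    qed
  qed
qed


lemma E1: assumes "om \<in> EE" "x \<in> PP" "y \<in> PP" "nbP x y" shows "om x y \<in> GG"
proof -
  have "\<forall>x\<in>PP. \<forall>y\<in>PP. nbP x y \<longrightarrow> om x y \<in> GG"
    using EE_iff[THEN iffD1, OF assms(1)] by (elim conjE) assumption
  then show ?thesis using assms(2-) by blast
qed
lemma E2: assumes "om \<in> EE" "x \<in> PP" shows "om x x = ide s"
proof -
  have "\<forall>x\<in>PP. om x x = ide s"
    using EE_iff[THEN iffD1, OF assms(1)] by (elim conjE) assumption
  then show ?thesis using assms(2-) by blast
qed
lemma E3: assumes "om \<in> EE" "x \<in> PP" "y \<in> PP" "nbP x y" shows "om y x = iv (om x y)"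
proof -
  have "\<forall>x\<in>PP. \<forall>y\<in>PP. nbP x y \<longrightarrow> om y x = iv (om x y)"
    using EE_iff[THEN iffD1, OF assms(1)] by (elim conjE) assumption
  then show ?thesis using assms(2-) by blast
qed
lemma E4: assumes "om \<in> EE" "\<not> (x \<in> PP \<and> y \<in> PP \<and> nbP x y)" shows "om x y = undefined"
proof -
  have "\<forall>x y. \<not> (x \<in> PP \<and> y \<in> PP \<and> nbP x y) \<longrightarrow> om x y = undefined"
    using EE_iff[THEN iffD1, OF assms(1)] by (elim conjE) assumption
  then show ?thesis using assms(2-) by blast
qed
lemma E5: assumes "om \<in> EE" "x \<in> PP" "y \<in> PP" "g \<in> GG" "nbP x y" "nbP (cmp x g) y"
  shows "om (cmp x g) y = cmp (iv g) (om x y)"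
proof -
  have "\<forall>x\<in>PP. \<forall>y\<in>PP. \<forall>g\<in>GG. nbP x y \<longrightarrow> nbP (cmp x g) y \<longrightarrow>
              om (cmp x g) y = cmp (iv g) (om x y)"
    using EE_iff[THEN iffD1, OF assms(1)] by (elim conjE) assumption
  then show ?thesis using assms(2-) by blast
qed
lemma E6: assumes "om \<in> EE" "x \<in> PP" "y \<in> PP" "g \<in> GG" "nbP x y"
  shows "om (cmp x g) (cmp y g) = cmp (iv g) (cmp (om x y) g)"
proof -
  have "\<forall>x\<in>PP. \<forall>y\<in>PP. \<forall>g\<in>GG. nbP x y \<longrightarrow>
              om (cmp x g) (cmp y g) = cmp (iv g) (cmp (om x y) g)"
    using EE_iff[THEN iffD1, OF assms(1)] by (elim conjE) assumption
  then show ?thesis using assms(2-) by blast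
qed

lemma indep:
  assumes om: "om \<in> EE" and P: "x \<in> PP" "y \<in> PP" "x' \<in> PP" "y' \<in> PP"
    and nb: "nbP x y" "nbP x' y'" and c: "cd x' = cd x" "cd y' = cd y"
  shows "cmp x (cmp (om x y) (iv y)) = cmp x' (cmp (om x' y') (iv y'))"
proof -
  define h where "h = cmp (iv y) y'"
  have hG: "h \<in> Arr" "dm h = s" "cd h = s" using P c unfolding h_def by (simp_all add: inP)
  have ihG: "iv h \<in> GG" using hG by (simp add: inG)
  define k where "k = cmp (cmp (iv x) x') (iv h)"
  have kG: "k \<in> Arr" "dm k = s" "cd k = s" using P c hG unfolding k_def by (simp_all add: inP)
  define x1 where "x1 = cmp x k"
  have x1P: "x1 \<in> PP" using P kG unfolding x1_def by (simp add: inP)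
  have yeq: "cmp y h = y'" using P c unfolding h_def by (simp add: inP)
  have kh: "cmp k h = cmp (iv x) x'" using P c hG unfolding k_def
    by (simp add: inP)
  have xeq: "cmp x1 h = x'"
  proof -
    have "cmp x1 h = cmp x (cmp k h)" unfolding x1_def using P kG hG by (simp add: inP)
    also have "\<dots> = x'" using kh P c by (simp add: inP)
    finally show ?thesis .
  qed
  have "nbP (cmp x' (iv h)) (cmp y' (iv h))" using act[OF P(3,4) ihG nb(2)] .
  moreover have "cmp x' (iv h) = x1" using xeq[symmetric] x1P hG by (simp add: inP)
  moreover have "cmp y' (iv h) = y" using yeq[symmetric] P hG by (simp add: inP)
  ultimately have nb1: "nbP x1 y" by simp
  have kGG: "k \<in> GG" "h \<in> GG" using kG hG by (simp_all add: inG)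
  have w: "om x y \<in> GG" using E1[OF om P(1,2) nb(1)] .
  have e1: "om x1 y = cmp (iv k) (om x y)"
    using E5[OF om P(1,2) kGG(1) nb(1)] nb1 unfolding x1_def by simp
  have e2: "om x' y' = cmp (iv h) (cmp (om x1 y) h)"
    using E6[OF om x1P P(2) kGG(2) nb1] xeq yeq by simp
  have "cmp x' (cmp (om x' y') (iv y')) =
     cmp (cmp x1 h) (cmp (cmp (iv h) (cmp (cmp (iv k) (om x y)) h)) (iv (cmp y h)))"
    unfolding xeq yeq e2 e1 by (rule refl)
  also have "\<dots> = cmp x (cmp (om x y) (iv y))"
    unfolding x1_def using P w kG hG by (simp add: inP inG)
  finally show ?thesis by simp
qed

lemma partC:
  assumes om: "om \<in> EE"
  shows "om \<in> CF ` CC"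
proof -
  define Q where "Q a b p \<longleftrightarrow> fst p \<in> PP \<and> snd p \<in> PP \<and> cd (fst p) = a \<and> cd (snd p) = b \<and> nbP (fst p) (snd p)" for a b p
  define nab where "nab a b = (if a \<in> M \<and> b \<in> M \<and> nbM a b then
     cmp (fst (SOME p. Q a b p)) (cmp (om (fst (SOME p. Q a b p)) (snd (SOME p. Q a b p))) (iv (snd (SOME p. Q a b p))))
     else undefined)" for a b
  have key: "nab (cd x) (cd y) = cmp x (cmp (om x y) (iv y))"
    if xy: "x \<in> PP" "y \<in> PP" "nbP x y" for x y
  proof -
    have m: "cd x \<in> M" "cd y \<in> M" using xy by (simp_all add: inP)
    have "Q (cd x) (cd y) (x, y)" unfolding Q_def using xy by simp
    then have q: "Q (cd x) (cd y) (SOME p. Q (cd x) (cd y) p)" by (rule someI)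
    have "nab (cd x) (cd y) = cmp (fst (SOME p. Q (cd x) (cd y) p))
       (cmp (om (fst (SOME p. Q (cd x) (cd y) p)) (snd (SOME p. Q (cd x) (cd y) p))) (iv (snd (SOME p. Q (cd x) (cd y) p))))"
      unfolding nab_def using m pres[OF xy] by simp
    also have "\<dots> = cmp x (cmp (om x y) (iv y))"
      using q unfolding Q_def by (intro indep[OF om _ _ xy(1,2) _ xy(3)]) auto
    finally show ?thesis .
  qed
  have pair: "\<exists>x y. x \<in> PP \<and> y \<in> PP \<and> nbP x y \<and> cd x = a \<and> cd y = b"
    if ab: "a \<in> M" "b \<in> M" "nbM a b" for a b
  proof -
    obtain x where x: "x \<in> PP" "cd x = a" using surjP[OF ab(1)] by blast
    obtain y where "y \<in> PP" "cd y = b" "nbP x y" using lift2[OF ab x] by blast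
    then show ?thesis using x by blast
  qed
  have c1: "\<forall>a\<in>M. \<forall>b\<in>M. nbM a b \<longrightarrow> nab a b \<in> Arr \<and> dm (nab a b) = b \<and> cd (nab a b) = a"
  proof (intro ballI impI)
    fix a b assume ab: "a \<in> M" "b \<in> M" "nbM a b"
    then obtain x y where xy: "x \<in> PP" "y \<in> PP" "nbP x y" "cd x = a" "cd y = b" using pair by blast
    have w: "om x y \<in> GG" using E1[OF om xy(1-3)] .
    have k: "nab a b = cmp x (cmp (om x y) (iv y))" using key[OF xy(1-3)] xy by simp
    show "nab a b \<in> Arr \<and> dm (nab a b) = b \<and> cd (nab a b) = a"
      unfolding k using xy w by (simp add: inP inG)
  qed
  have c3: "\<forall>a\<in>M. \<forall>b\<in>M. nbM a b \<longrightarrow> nab b a = iv (nab a b)"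
  proof (intro ballI impI)
    fix a b assume ab: "a \<in> M" "b \<in> M" "nbM a b"
    then obtain x y where xy: "x \<in> PP" "y \<in> PP" "nbP x y" "cd x = a" "cd y = b" using pair by blast
    have w: "om x y \<in> GG" using E1[OF om xy(1-3)] .
    have k: "nab a b = cmp x (cmp (om x y) (iv y))" using key[OF xy(1-3)] xy by simp
    have k2: "nab b a = cmp y (cmp (om y x) (iv x))" using key[OF xy(2,1) nbP_sym[OF xy(1-3)]] xy by simp
    show "nab b a = iv (nab a b)"
      unfolding k k2 E3[OF om xy(1-3)] using xy w by (simp add: inP inG)
  qed
  have c2: "\<forall>a\<in>M. nab a a = ide a"
  proof
    fix a assume a: "a \<in> M"
    obtain x where x: "x \<in> PP" "cd x = a" using surjP[OF a] by blast
    have "nab a a = cmp x (cmp (om x x) (iv x))" using key[OF x(1) x(1) nbP_refl[OF x(1)]] x by simp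
    then show "nab a a = ide a" using E2[OF om x(1)] x by (simp add: inP)
  qed
  have c4: "\<forall>a b. \<not> (a \<in> M \<and> b \<in> M \<and> nbM a b) \<longrightarrow> nab a b = undefined"
    unfolding nab_def by simp
  have nabC: "nab \<in> CC"
    unfolding CC_iff by (intro conjI c1 c2 c3 c4)
  have "CF nab = om"
  proof (intro ext)
    fix u v
    show "CF nab u v = om u v"
    proof (cases "u \<in> PP \<and> v \<in> PP \<and> nbP u v")
      case True
      then have uv: "u \<in> PP" "v \<in> PP" "nbP u v" by auto
      have w: "om u v \<in> GG" using E1[OF om uv] .
      show ?thesis unfolding CF_app[OF uv] key[OF uv] using uv w by (simp add: inP inG)
    next
      case False
      then show ?thesis using E4[OF om False] unfolding connection_form_def by auto
    qed
  qed
  then show ?thesis using nabC by blast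
qed

lemma main: "bij_betw CF CC EE"
  unfolding bij_betw_def
proof
  show "inj_on CF CC" by (rule partB)
  show "CF ` CC = EE" using partA partC by blast
qed

end

theorem proposition1:
  assumes "bundle_setting Obj Arr dm cd cmp ide iv M s nbM nbP"
  shows "bij_betw (connection_form Arr dm cd cmp iv M s nbP)
           (connections Arr dm cd ide iv M nbM)
           (equivariant_forms Arr dm cd cmp ide iv M s nbP)"
proof -
  interpret bset Obj Arr dm cd cmp ide iv M s nbM nbP
    by (unfold_locales) (rule assms)
  show ?thesis by (rule main)
qed

end
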